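(* Let $\eta>0$ and $\alpha\in[0,1)$, and run the fixed-share algorithm with parameters $\eta,\alpha$. Then for all $T\ge1$, all loss vectors $\ell_1,\dots,\ell_T\in[0,1]^d$, and all $u_1,\dots,u_T\in\mathbb R_+^d$, \[ \sum_{t=1}^T\|u_t\|_1\hat p_t^\top\ell_t-\sum_{t=1}^Tu_t^\top\ell_t\le\frac{\|u_1\|_1\ln d}{\eta}+\frac\eta8\sum_{t=1}^T\|u_t\|_1+\frac{m(u_1^T)}{\eta}\ln\frac d\alpha+\frac{\sum_{t=2}^T\|u_t\|_1-m(u_1^T)}{\eta}\ln\frac1{1-\alpha}. \]
   Context: Let $d\ge1$ and $\Delta_d=\{q\in[0,1]^d:\sum_{i=1}^d q_i=1\}$. The generalized share algorithm with learning rate $\eta>0$ and mixing functions $\psi_t:[0,1]^{td}\to\Delta_d$ ($t\ge2$) works as follows: $\hat p_1=v_1=(1/d,\dots,1/d)$. At each round $t=1,2,\dots$ it predicts $\hat p_t=(\hat p_{1,t},\dots,\hat p_{d,t})\in\Delta_d$, observes a loss vector $\ell_t=(\ell_{1,t},\dots,\ell_{d,t})\in[0,1]^d$ (arbitrary), and suffers loss $\hat p_t^\top\ell_t$. It then forms the pre-weights $v_{j,t+1}=\hat p_{j,t}e^{-\eta\ell_{j,t}}/\sum_{i=1}^d\hat p_{i,t}e^{-\eta\ell_{i,t}}$ for $j=1,\dots,d$, sets $v_{t+1}=(v_{1,t+1},\dots,v_{d,t+1})$, and defines $\hat p_{t+1}=\psi_{t+1}(V_{t+1})$ where $V_{t+1}=[v_{i,s}]_{1\le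 i\le d,1\le s\le t+1}$ is the $d\times(t+1)$ matrix of all pre-weights so far. The fixed-share algorithm with parameters $\eta>0$, $\alpha\in[0,1]$ is the generalized share algorithm with the mixing rule $\hat p_{j,t+1}=\alpha/d+(1-\alpha)v_{j,t+1}$ for all $j$ and $t\ge1$. For $x,y\in\mathbb R_+^d$, $D_{\mathrm{TV}}(x,y)=\sum_{i:\,x_i\ge y_i}(x_i-y_i)$, and for $u_1,\dots,u_T\in\mathbb R_+^d$, $m(u_1^T)=\sum_{t=2}^T D_{\mathrm{TV}}(u_t,u_{t-1})$. The convention $\ln(d/0)=+\infty$ applies if $\alpha=0$. *)

theory Defs
  imports Complex_Main
begin

text \<open>Vectors in R^d are functions nat => real restricted to indices {..<d}.
  Loss sequence: l t i is the loss of expert i at round t (rounds t = 1,2,...).\<close>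

definition ew_update :: "nat \<Rightarrow> real \<Rightarrow> (nat \<Rightarrow> real) \<Rightarrow> (nat \<Rightarrow> real) \<Rightarrow> (nat \<Rightarrow> real)" where
  "ew_update d \<eta> p l = (\<lambda>j. p j * exp (- \<eta> * l j) / (\<Sum>i<d. p i * exp (- \<eta> * l i)))"

text \<open>Fixed-share predictions: fixed_share d eta alpha l t = p_hat_t for t >= 1
  (the value at t = 0 is a dummy).\<close>
fun fixed_share :: "nat \<Rightarrow> real \<Rightarrow> real \<Rightarrow> (nat \<Rightarrow> nat \<Rightarrow> real) \<Rightarrow> nat \<Rightarrow> (nat \<Rightarrow> real)" where
  "fixed_share d \<eta> \<alpha> l 0 = (\<lambda>j. 1 / real d)"
| "fixed_share d \<eta> \<alpha> l (Suc 0) = (\<lambda>j. 1 / real d)"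
| "fixed_share d \<eta> \<alpha> l (Suc (Suc t)) =
     (\<lambda>j. \<alpha> / real d + (1 - \<alpha>) *
        ew_update d \<eta> (fixed_share d \<eta> \<alpha> l (Suc t)) (l (Suc t)) j)"

definition norm1 :: "nat \<Rightarrow> (nat \<Rightarrow> real) \<Rightarrow> real" where
  "norm1 d x = (\<Sum>i<d. \<bar>x i\<bar>)"

definition dot :: "nat \<Rightarrow> (nat \<Rightarrow> real) \<Rightarrow> (nat \<Rightarrow> real) \<Rightarrow> real" where
  "dot d x y = (\<Sum>i<d. x i * y i)"

definition D_TV :: "nat \<Rightarrow> (nat \<Rightarrow> real) \<Rightarrow> (nat \<Rightarrow> real) \<Rightarrow> real" where
  "D_TV d x y = (\<Sum>i\<in>{i. i < d \<and> x i \<ge> y i}. x i - y i)"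

definition shifts :: "nat \<Rightarrow> (nat \<Rightarrow> nat \<Rightarrow> real) \<Rightarrow> nat \<Rightarrow> real" where
  "shifts d u T = (\<Sum>t=2..T. D_TV d (u t) (u (t - 1)))"

end

theory Submission imports Defs "HOL-Probability.Hoeffding" begin

lemma exp_convex_bound:
  fixes \<eta> x :: real assumes "0 \<le> x" "x \<le> 1"
  shows "exp (-\<eta> * x) \<le> (1 - x) + x * exp (-\<eta>)"
proof -
  have "exp (1 * ((1 - x) *\<^sub>R 0 + x *\<^sub>R (-\<eta>))) \<le> (1 - x) * exp (1 * 0) + x * exp (1 * (-\<eta>))"
    by (rule convex_onD[OF convex_on_exp]) (use assms in auto)
  thus ?thesis by (simp add: mult.commute)
qed

lemma hoeff:
  fixes \<eta> :: real and p q :: "nat \<Rightarrow> real"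
  assumes "\<eta> > 0" "\<And>i. i < d \<Longrightarrow> 0 \<le> p i" "(\<Sum>i<d. p i) = 1"
    "\<And>i. i < d \<Longrightarrow> 0 \<le> q i \<and> q i \<le> 1"
  shows "ln (\<Sum>i<d. p i * exp (-\<eta> * q i)) \<le> -\<eta> * (\<Sum>i<d. p i * q i) + \<eta>\<^sup>2 / 8"
proof -
  define m where "m = (\<Sum>i<d. p i * q i)"
  have m0: "0 \<le> m" unfolding m_def using assms by (auto intro!: sum_nonneg)
  have "m \<le> (\<Sum>i<d. p i * 1)" unfolding m_def
    by (rule sum_mono) (metis assms(2,4) lessThan_iff mult_left_mono)
  hence m1: "m \<le> 1" using assms(3) by simp
  have Zge: "(\<Sum>i<d. p i * exp (-\<eta>)) \<le> (\<Sum>i<d. p i * exp (-\<eta> * q i))"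
    using assms by (auto intro!: sum_mono mult_left_mono)
  have "(\<Sum>i<d. p i * exp (-\<eta>)) = exp (-\<eta>)" using assms(3) by (simp add: sum_distrib_right[symmetric])
  with Zge have Zpos: "0 < (\<Sum>i<d. p i * exp (-\<eta> * q i))" by (metis exp_gt_zero less_le_trans)
  have "(\<Sum>i<d. p i * exp (-\<eta> * q i)) \<le> (\<Sum>i<d. p i * ((1 - q i) + q i * exp (-\<eta>)))"
    using assms exp_convex_bound[of "q _" \<eta>] by (auto intro!: sum_mono mult_left_mono)
  also have "\<dots> = (\<Sum>i<d. p i) - m + m * exp (-\<eta>)"
    by (simp add: m_def algebra_simps sum.distrib sum_subtractf sum_distrib_left)
  also have "\<dots> = exp (-\<eta>) * (1 + (1 - m) * (exp \<eta> - 1))"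
    using assms(3) by (simp add: algebra_simps exp_minus field_simps)
  finally have Zle: "(\<Sum>i<d. p i * exp (-\<eta> * q i)) \<le> exp (-\<eta>) * (1 + (1 - m) * (exp \<eta> - 1))" .
  have pos2: "1 + (1 - m) * (exp \<eta> - 1) \<ge> 1" using m1 assms(1) by (simp add: mult_nonneg_nonneg)
  have "ln (\<Sum>i<d. p i * exp (-\<eta> * q i)) \<le> ln (exp (-\<eta>) * (1 + (1 - m) * (exp \<eta> - 1)))"
    using Zpos Zle by simp
  also have "\<dots> = -\<eta> + ln (1 + (1 - m) * (exp \<eta> - 1))"
    using pos2 by (simp add: ln_mult)
  also have "\<dots> \<le> -\<eta> * m + \<eta>\<^sup>2 / 8"
    using Hoeffdings_lemma_aux[of \<eta> "1 - m"] assms(1) m1 by (simp add: algebra_simps)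
  finally show ?thesis unfolding m_def .
qed

lemma ew_props:
  assumes "d \<ge> 1" "\<And>i. i < d \<Longrightarrow> 0 < p i"
  shows "\<And>j. j < d \<Longrightarrow> 0 < ew_update d \<eta> p q j"
    and "(\<Sum>j<d. ew_update d \<eta> p q j) = 1"
proof -
  have Z: "0 < (\<Sum>i<d. p i * exp (- \<eta> * q i))"
    using assms by (intro sum_pos) (auto simp: lessThan_empty_iff)
  show "\<And>j. j < d \<Longrightarrow> 0 < ew_update d \<eta> p q j"
    unfolding ew_update_def using Z assms by auto
  show "(\<Sum>j<d. ew_update d \<eta> p q j) = 1"
    unfolding ew_update_def using Z by (simp add: sum_divide_distrib[symmetric])
qed

lemma fs_props:
  assumes "d \<ge> 1" "0 \<le> \<alpha>" "\<alpha> < 1"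
  shows "(\<forall>i<d. 0 < fixed_share d \<eta> \<alpha> l t i) \<and> (\<Sum>i<d. fixed_share d \<eta> \<alpha> l t i) = 1"
proof (induction t rule: less_induct)
  case (less t)
  consider "t = 0" | "t = Suc 0" | k where "t = Suc (Suc k)"
    by (metis not0_implies_Suc)
  then show ?case
  proof cases
    case 1 then show ?thesis using assms by auto
  next
    case 2 then show ?thesis using assms by auto
  next
    case 3
    have IH: "\<forall>i<d. 0 < fixed_share d \<eta> \<alpha> l (Suc k) i" using less 3 by auto
    note ew = ew_props[OF assms(1), where p="fixed_share d \<eta> \<alpha> l (Suc k)" and \<eta>=\<eta> and q="l (Suc k)"]
    have pos: "\<forall>i<d. 0 < fixed_share d \<eta> \<alpha> l t i"
    proof (intro allI impI)
      fix i assume "i < d"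
      then have "0 < (1 - \<alpha>) * ew_update d \<eta> (fixed_share d \<eta> \<alpha> l (Suc k)) (l (Suc k)) i"
        using ew(1) IH assms by auto
      moreover have "0 \<le> \<alpha> / real d" using assms by auto
      ultimately show "0 < fixed_share d \<eta> \<alpha> l t i" using 3 by simp
    qed
    have "(\<Sum>i<d. fixed_share d \<eta> \<alpha> l t i)
       = (\<Sum>i<d. \<alpha> / real d) + (1 - \<alpha>) * (\<Sum>i<d. ew_update d \<eta> (fixed_share d \<eta> \<alpha> l (Suc k)) (l (Suc k)) i)"
      using 3 by (simp add: sum.distrib sum_distrib_left)
    also have "\<dots> = 1" using ew(2) IH assms by simp
    finally show ?thesis using pos by simp
  qed
qed

lemma comp_bound:
  fixes a b x y L :: real
  assumes "0 \<le> a" "0 \<le> b" "x \<le> 0" "x - y \<le> L"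
  shows "a * x - b * y \<le> min a b * L + max (b - a) 0 * (- y)"
proof (cases "a \<le> b")
  case True
  have "a * (x - y) \<le> a * L" using assms by (intro mult_left_mono) auto
  then show ?thesis using True by (simp add: algebra_simps)
next
  case False
  have "b * (x - y) \<le> b * L" using assms by (intro mult_left_mono) auto
  moreover have "(a - b) * x \<le> 0" using False assms by (simp add: mult_nonneg_nonpos)
  ultimately show ?thesis using False by (simp add: algebra_simps)
qed

lemma DTV_eq: "D_TV d x y = (\<Sum>i<d. max (x i - y i) 0)"
proof -
  have "{i. i < d \<and> x i \<ge> y i} = {i \<in> {..<d}. y i \<le> x i}" by auto
  then have "D_TV d x y = (\<Sum>i<d. if y i \<le> x i then x i - y i else 0)"
    unfolding D_TV_def by (simp only: sum.inter_filter[OF finite_lessThan, symmetric])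
  also have "\<dots> = (\<Sum>i<d. max (x i - y i) 0)" by (intro sum.cong) auto
  finally show ?thesis .
qed

lemma telescope:
  fixes A B :: "nat \<Rightarrow> real"
  assumes "T \<ge> 1"
  shows "(\<Sum>t=1..T. A t - B t) = A T - B 1 + (\<Sum>t=2..T. A (t - 1) - B t)"
  using assms
proof (induction T rule: dec_induct)
  case base then show ?case by simp
next
  case (step n)
  have "(\<Sum>t=2..Suc n. A (t - 1) - B t) = (\<Sum>t=2..n. A (t - 1) - B t) + (A n - B (Suc n))"
    using step(1) by simp
  then show ?case using step by simp
qed

lemma theorem2_aux:
  fixes d T :: nat and \<eta> \<alpha> :: real
    and l u :: "nat \<Rightarrow> nat \<Rightarrow> real"
  assumes "d \<ge> 1" and "\<eta> > 0" and "0 \<le> \<alpha>" and "\<alpha> < 1" and "T \<ge> 1"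
    and "\<And>t i. t \<in> {1..T} \<Longrightarrow> i < d \<Longrightarrow> 0 \<le> l t i \<and> l t i \<le> 1"
    and "\<And>t i. t \<in> {1..T} \<Longrightarrow> i < d \<Longrightarrow> 0 \<le> u t i"
    and cond: "\<alpha> > 0 \<or> shifts d u T = 0"
  shows "(\<Sum>t=1..T. norm1 d (u t) * dot d (fixed_share d \<eta> \<alpha> l t) (l t))
      - (\<Sum>t=1..T. dot d (u t) (l t))
    \<le> norm1 d (u 1) * ln (real d) / \<eta>
      + \<eta> / 8 * (\<Sum>t=1..T. norm1 d (u t))
      + shifts d u T / \<eta> * ln (real d / \<alpha>)
      + ((\<Sum>t=2..T. norm1 d (u t)) - shifts d u T) / \<eta> * ln (1 / (1 - \<alpha>))"
proof -
  note d1 = assms(1) and eta = assms(2) and a0 = assms(3) and a1 = assms(4) and T1 = assms(5)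
  note lb = assms(6) and ub = assms(7)
  define P where "P t = fixed_share d \<eta> \<alpha> l t" for t
  define W where "W t = ew_update d \<eta> (P t) (l t)" for t
  define A where "A t = (\<Sum>i<d. u t i * ln (W t i))" for t
  define B where "B t = (\<Sum>i<d. u t i * ln (P t i))" for t
  define L1 where "L1 = ln (1 / (1 - \<alpha>))"
  define L2 where "L2 = ln (real d / \<alpha>)"
  define S where "S t = D_TV d (u t) (u (t - 1))" for t
  have Ppos: "\<And>t i. i < d \<Longrightarrow> 0 < P t i" and Psum: "\<And>t. (\<Sum>i<d. P t i) = 1"
    using fs_props[OF d1 a0 a1] unfolding P_def by auto
  have Wpos: "\<And>t i. i < d \<Longrightarrow> 0 < W t i" and Wsum: "\<And>t. (\<Sum>i<d. W t i) = 1"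
    using ew_props[OF d1 Ppos] unfolding W_def by auto
  have Wle1: "W t i \<le> 1" if "i < d" for t i
  proof -
    have "W t i \<le> (\<Sum>i<d. W t i)"
      using that Wpos by (intro member_le_sum) (auto intro: less_imp_le)
    then show ?thesis using Wsum by simp
  qed
  have Prec: "P t j = \<alpha> / real d + (1 - \<alpha>) * W (t - 1) j" if "t \<ge> 2" for t j
  proof -
    define k where "k = t - 2"
    have k: "t = Suc (Suc k)" using that unfolding k_def by simp
    show ?thesis unfolding P_def W_def k by simp
  qed
  have unn: "0 \<le> u t i" if "t \<in> {1..T}" "i < d" for t i using ub that by auto
  have n1: "norm1 d (u t) = (\<Sum>i<d. u t i)" if "t \<in> {1..T}" for t
    unfolding norm1_def using unn[OF that] by (intro sum.cong) auto
  have n1nn: "0 \<le> norm1 d (u t)" for t unfolding norm1_def by (intro sum_nonneg) auto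

  have round: "norm1 d (u t) * dot d (P t) (l t) - dot d (u t) (l t)
      \<le> (A t - B t) / \<eta> + \<eta> / 8 * norm1 d (u t)" if t: "t \<in> {1..T}" for t
  proof -
    define Z where "Z = (\<Sum>i<d. P t i * exp (- \<eta> * l t i))"
    have Zpos: "0 < Z" unfolding Z_def
      using d1 Ppos by (intro sum_pos) (auto simp: lessThan_empty_iff)
    have lnW: "ln (W t i) = ln (P t i) - \<eta> * l t i - ln Z" if "i < d" for i
    proof -
      have "W t i = P t i * exp (- \<eta> * l t i) / Z"
        unfolding W_def ew_update_def Z_def by simp
      moreover have "0 < P t i" using Ppos[OF that] .
      ultimately show ?thesis using Zpos by (simp add: ln_div ln_mult)
    qed
    have "A t - B t = (\<Sum>i<d. u t i * (ln (W t i) - ln (P t i)))"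
      unfolding A_def B_def by (simp add: sum_subtractf right_diff_distrib)
    also have "\<dots> = (\<Sum>i<d. u t i * (- \<eta> * l t i - ln Z))"
      using lnW by (intro sum.cong) auto
    also have "\<dots> = (\<Sum>i<d. (- \<eta>) * (u t i * l t i) - ln Z * u t i)"
      by (intro sum.cong) (auto simp: algebra_simps)
    also have "\<dots> = (- \<eta>) * (\<Sum>i<d. u t i * l t i) - ln Z * (\<Sum>i<d. u t i)"
      by (simp only: sum_subtractf sum_distrib_left)
    also have "\<dots> = - \<eta> * dot d (u t) (l t) - norm1 d (u t) * ln Z"
      unfolding dot_def n1[OF t] by simp
    finally have AB: "A t - B t = - \<eta> * dot d (u t) (l t) - norm1 d (u t) * ln Z" .
    have H: "ln Z \<le> - \<eta> * dot d (P t) (l t) + \<eta>\<^sup>2 / 8"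
      unfolding Z_def dot_def
      by (rule hoeff[OF eta]) (use Ppos Psum lb t in \<open>auto intro: less_imp_le\<close>)
    have "norm1 d (u t) * ln Z \<le> norm1 d (u t) * (- \<eta> * dot d (P t) (l t) + \<eta>\<^sup>2 / 8)"
      using H n1nn by (intro mult_left_mono) auto
    then have "norm1 d (u t) * ln Z / \<eta> \<le> norm1 d (u t) * (- \<eta> * dot d (P t) (l t) + \<eta>\<^sup>2 / 8) / \<eta>"
      using eta by (intro divide_right_mono) auto
    also have "\<dots> = - norm1 d (u t) * dot d (P t) (l t) + \<eta> / 8 * norm1 d (u t)"
      using eta by (simp add: field_simps power2_eq_square)
    finally have K: "norm1 d (u t) * ln Z / \<eta> \<le> - norm1 d (u t) * dot d (P t) (l t) + \<eta> / 8 * norm1 d (u t)" .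
    have "(A t - B t) / \<eta> = - dot d (u t) (l t) - norm1 d (u t) * ln Z / \<eta>"
      using eta unfolding AB by (simp add: field_simps)
    then show ?thesis using K by linarith
  qed
  have Snn: "0 \<le> S t" for t unfolding S_def DTV_eq by (intro sum_nonneg) auto
  have comp: "A (t - 1) - B t \<le> (norm1 d (u t) - S t) * L1 + S t * L2" if t: "t \<in> {2..T}" for t
  proof -
    have t1: "t \<in> {1..T}" "t - 1 \<in> {1..T}" using t by auto
    have xle: "ln (W (t - 1) i) \<le> 0" if "i < d" for i
    proof -
      have "0 < W (t - 1) i" "W (t - 1) i \<le> 1" using Wpos[OF that] Wle1[OF that] by auto
      then show ?thesis by simp
    qed
    have xy: "ln (W (t - 1) i) - ln (P t i) \<le> L1" if i: "i < d" for i
    proof -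
      have wp: "0 < W (t - 1) i" using Wpos[OF i] .
      have "(1 - \<alpha>) * W (t - 1) i \<le> P t i"
        using Prec[of t i] t a0 by simp
      then have "ln ((1 - \<alpha>) * W (t - 1) i) \<le> ln (P t i)"
        using a1 wp Ppos[OF i] by (subst ln_le_cancel_iff) auto
      then show ?thesis unfolding L1_def using a1 wp by (simp add: ln_mult ln_div)
    qed
    have "A (t - 1) - B t = (\<Sum>i<d. u (t - 1) i * ln (W (t - 1) i) - u t i * ln (P t i))"
      unfolding A_def B_def by (simp add: sum_subtractf)
    also have "\<dots> \<le> (\<Sum>i<d. min (u (t - 1) i) (u t i) * L1 + max (u t i - u (t - 1) i) 0 * (- ln (P t i)))"
      by (intro sum_mono comp_bound) (use unn t1 xle xy in auto)
    also have "\<dots> = (\<Sum>i<d. min (u (t - 1) i) (u t i)) * L1 + (\<Sum>i<d. max (u t i - u (t - 1) i) 0 * (- ln (P t i)))"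
      by (simp only: sum.distrib sum_distrib_right)
    also have "(\<Sum>i<d. min (u (t - 1) i) (u t i)) = (\<Sum>i<d. u t i - max (u t i - u (t - 1) i) 0)"
      by (intro sum.cong) auto
    also have "\<dots> = norm1 d (u t) - S t"
      unfolding S_def DTV_eq n1[OF t1(1)] by (simp add: sum_subtractf)
    also have "(\<Sum>i<d. max (u t i - u (t - 1) i) 0 * (- ln (P t i))) \<le> S t * L2"
    proof (cases "\<alpha> > 0")
      case True
      have "(\<Sum>i<d. max (u t i - u (t - 1) i) 0 * (- ln (P t i))) \<le> (\<Sum>i<d. max (u t i - u (t - 1) i) 0 * L2)"
      proof (intro sum_mono mult_left_mono)
        fix i assume "i \<in> {..<d}"
        then have i: "i < d" by simp
        have "\<alpha> / real d \<le> P t i" using Prec[of t i] t a1 Wpos[OF i]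
          by (simp add: less_imp_le)
        then have "ln (\<alpha> / real d) \<le> ln (P t i)"
          using True d1 Ppos[OF i] by (subst ln_le_cancel_iff) auto
        then show "- ln (P t i) \<le> L2" unfolding L2_def using True d1 by (simp add: ln_div)
      qed auto
      also have "\<dots> = S t * L2" unfolding S_def DTV_eq by (simp add: sum_distrib_right)
      finally show ?thesis .
    next
      case False
      then have sh0: "shifts d u T = 0" using cond by simp
      have "S t = 0"
        using sh0 t Snn unfolding shifts_def S_def[symmetric]
        by (subst (asm) sum_nonneg_eq_0_iff) auto
      then have "\<forall>i\<in>{..<d}. max (u t i - u (t - 1) i) 0 = 0"
        unfolding S_def DTV_eq by (subst (asm) sum_nonneg_eq_0_iff) auto
      then have "(\<Sum>i<d. max (u t i - u (t - 1) i) 0 * (- ln (P t i))) = 0" by simp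
      then show ?thesis using \<open>S t = 0\<close> by simp
    qed
    finally show ?thesis by simp
  qed
  have AT: "A T \<le> 0" unfolding A_def
  proof (intro sum_nonpos mult_nonneg_nonpos)
    fix i assume "i \<in> {..<d}"
    then have i: "i < d" by simp
    show "0 \<le> u T i" using unn[OF _ i, of T] T1 by simp
    have "0 < W T i" "W T i \<le> 1" using Wpos[OF i] Wle1[OF i] by auto
    then show "ln (W T i) \<le> 0" by simp
  qed
  have B1: "B 1 = - norm1 d (u 1) * ln (real d)"
  proof -
    have "B 1 = (\<Sum>i<d. u 1 i * (- ln (real d)))"
      unfolding B_def P_def using d1 by (intro sum.cong) (auto simp: ln_div)
    also have "\<dots> = - norm1 d (u 1) * ln (real d)"
      using n1[of 1] T1 by (simp add: sum_distrib_right sum_negf)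
    finally show ?thesis .
  qed
  have shS: "shifts d u T = (\<Sum>t=2..T. S t)" unfolding shifts_def S_def ..
  have sumAB: "(\<Sum>t=1..T. A t - B t) \<le> norm1 d (u 1) * ln (real d)
      + ((\<Sum>t=2..T. norm1 d (u t)) - shifts d u T) * L1 + shifts d u T * L2"
  proof -
    have "(\<Sum>t=1..T. A t - B t) = A T - B 1 + (\<Sum>t=2..T. A (t - 1) - B t)"
      by (rule telescope[OF T1])
    also have "\<dots> \<le> 0 + norm1 d (u 1) * ln (real d) + (\<Sum>t=2..T. (norm1 d (u t) - S t) * L1 + S t * L2)"
      using AT B1 sum_mono[of "{2..T}" "\<lambda>t. A (t - 1) - B t" "\<lambda>t. (norm1 d (u t) - S t) * L1 + S t * L2"] comp
      by auto
    also have "(\<Sum>t=2..T. (norm1 d (u t) - S t) * L1 + S t * L2)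
        = ((\<Sum>t=2..T. norm1 d (u t)) - (\<Sum>t=2..T. S t)) * L1 + (\<Sum>t=2..T. S t) * L2"
      by (simp only: sum.distrib sum_distrib_right[symmetric] sum_subtractf)
    finally show ?thesis unfolding shS by simp
  qed
  have "(\<Sum>t=1..T. norm1 d (u t) * dot d (fixed_share d \<eta> \<alpha> l t) (l t))
      - (\<Sum>t=1..T. dot d (u t) (l t))
      = (\<Sum>t=1..T. norm1 d (u t) * dot d (P t) (l t) - dot d (u t) (l t))"
    unfolding P_def by (simp add: sum_subtractf)
  also have "\<dots> \<le> (\<Sum>t=1..T. (A t - B t) / \<eta> + \<eta> / 8 * norm1 d (u t))"
    by (intro sum_mono round) auto
  also have "\<dots> = (\<Sum>t=1..T. A t - B t) / \<eta> + \<eta> / 8 * (\<Sum>t=1..T. norm1 d (u t))"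
    by (simp only: sum.distrib sum_divide_distrib sum_distrib_left)
  also have "\<dots> \<le> (norm1 d (u 1) * ln (real d)
      + ((\<Sum>t=2..T. norm1 d (u t)) - shifts d u T) * L1 + shifts d u T * L2) / \<eta>
      + \<eta> / 8 * (\<Sum>t=1..T. norm1 d (u t))"
    using sumAB eta by (intro add_right_mono divide_right_mono) auto
  also have "\<dots> = norm1 d (u 1) * ln (real d) / \<eta>
      + \<eta> / 8 * (\<Sum>t=1..T. norm1 d (u t))
      + shifts d u T / \<eta> * ln (real d / \<alpha>)
      + ((\<Sum>t=2..T. norm1 d (u t)) - shifts d u T) / \<eta> * ln (1 / (1 - \<alpha>))"
    unfolding L1_def L2_def by (simp add: add_divide_distrib)
  finally show ?thesis .
qed

theorem theorem2:
  fixes d T :: nat and \<eta> \<alpha> :: real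
    and l u :: "nat \<Rightarrow> nat \<Rightarrow> real"
  assumes "d \<ge> 1" and "\<eta> > 0" and "0 \<le> \<alpha>" and "\<alpha> < 1" and "T \<ge> 1"
    and "\<And>t i. t \<in> {1..T} \<Longrightarrow> i < d \<Longrightarrow> 0 \<le> l t i \<and> l t i \<le> 1"
    and "\<And>t i. t \<in> {1..T} \<Longrightarrow> i < d \<Longrightarrow> 0 \<le> u t i"
  shows "(\<alpha> > 0 \<or> shifts d u T = 0) \<longrightarrow>
    (\<Sum>t=1..T. norm1 d (u t) * dot d (fixed_share d \<eta> \<alpha> l t) (l t))
      - (\<Sum>t=1..T. dot d (u t) (l t))
    \<le> norm1 d (u 1) * ln (real d) / \<eta>
      + \<eta> / 8 * (\<Sum>t=1..T. norm1 d (u t))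
      + shifts d u T / \<eta> * ln (real d / \<alpha>)
      + ((\<Sum>t=2..T. norm1 d (u t)) - shifts d u T) / \<eta> * ln (1 / (1 - \<alpha>))"
  apply (rule impI)
  apply (rule theorem2_aux)
  using assms by auto

end
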